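(* Let $M$ be a sharp, integral monoid and $\phi:\Gamma\to\Gamma'$ a harmonic, non-degenerate morphism of $M$-metrised graphs. Then for every effective divisor $D'\in\operatorname{Div}(\Gamma')$ we have $r(\phi^*(D'))\ge r(D')$.
   Context: Monoids are commutative, sharp (only unit $0$), integral (cancellative), with groupification $M^{gp}$; $\langle m\rangle=\{km:k\in\mathbb Z\}\subseteq M^{gp}$ and for $x=km$, $m\ne0$, $x/m:=k$. A graph is $(X,r,i)$, $X$ finite, $r$ idempotent, $i$ an involution, $i(x)=x\iff r(x)=x$; vertices $V$ = fixed points, half-edges $H=X\setminus V$, edges $\{e,i(e)\}$ joining $r(e),r(i(e))$, $H_v=\{e\in H:r(e)=v\}$; graphs are connected. An $M$-metrised graph adds $l:X\to M$ with $l(i(x))=l(x)$, $l(x)=0\iff x\in V$. Divisors: elements of the free abelian group on $V$, partially ordered pointwise; $\operatorname{Div}^k_+$ = effective divisors of degree $k$. $\operatorname{PL}(\Gamma)=\{g:V\to M^{gp}: g(r(e))-g(r(i(e)))\in\langle l(e)\rangle\ \forall e\in H\}$; $\Delta(g)=\sum_{v}\big(\sum_{e\in H_v}\frac{g(v)-g(r(i(e)))}{l(e)}\big)[v]$; principal divisors $\operatorname{Prin}(\Gamma)=\Delta(\operatorname{PL}(\Gamma))$; $D\sim D'$ iff $D-D'\in\operatorname{Prin}(\Gamma)$; $|D|=\{E\ge0: E\sim D\}$; rank $r(D)=\max\{k\in\mathbb Z:|D-F|\ne\emptyset\text{ for all }F\in\operatorname{Div}^k_+(\Gamma)\}$. A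 morphism $\phi:\Gamma\to\Gamma'$ is a map $X\to X'$ with $\phi(V)\subseteq V'$; if $\phi(e)=e'\in H'$ then $\phi(r(e))=r'(e')$, $\phi(r(i(e)))=r'(i'(e'))$, $l'(e')\in\langle l(e)\rangle$; if $\phi(e)=v'\in V'$ then $\phi(r(e))=\phi(r(i(e)))=v'$. Slope $\mu_\phi(e)=l'(\phi(e))/l(e)$ if $\phi(e)\in H'$, else $0$; $m_{\phi,v}(e')=\sum_{e\in H_v,\phi(e)=e'}\mu_\phi(e)$ for $e'\in H'_{\phi(v)}$; harmonic: independent of $e'$ for each $v$, common value $m_\phi(v)$; non-degenerate: $m_\phi(v)>0$ for all $v$. $\phi^*(D')=\sum_{v}D'(\phi(v))m_\phi(v)[v]$. *)

theory Defs
  imports Main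
begin

text \<open>A commutative, sharp, integral monoid M is represented as a subset M of an
abelian group 'g (its groupification): M contains 0, is closed under +, is sharp,
and generates 'g as a group (every element is a difference of two elements of M).
Integrality is automatic since M embeds into 'g.\<close>

definition sharp_integral_monoid :: "'g::ab_group_add set \<Rightarrow> bool" where
  "sharp_integral_monoid M \<longleftrightarrow>
     0 \<in> M \<and> (\<forall>a\<in>M. \<forall>b\<in>M. a + b \<in> M) \<and>
     (\<forall>a\<in>M. \<forall>b\<in>M. a + b = 0 \<longrightarrow> a = 0 \<and> b = 0) \<and>
     (\<forall>x. \<exists>a\<in>M. \<exists>b\<in>M. x = a - b)"

definition zmul :: "int \<Rightarrow> 'g::ab_group_add \<Rightarrow> 'g" where
  "zmul k x = (if 0 \<le> k then (\<Sum>_<nat k. x) else - (\<Sum>_<nat (-k). x))"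

definition zspan :: "'g::ab_group_add \<Rightarrow> 'g set" where
  "zspan m = range (\<lambda>k. zmul k m)"

definition zdiv :: "'g::ab_group_add \<Rightarrow> 'g \<Rightarrow> int" where
  "zdiv x m = (THE k. x = zmul k m)"

record ('x, 'g) mgraph =
  gX :: "'x set"
  gr :: "'x \<Rightarrow> 'x"
  gi :: "'x \<Rightarrow> 'x"
  gl :: "'x \<Rightarrow> 'g"

definition gV :: "('x, 'g) mgraph \<Rightarrow> 'x set" where
  "gV G = {x \<in> gX G. gr G x = x}"

definition gH :: "('x, 'g) mgraph \<Rightarrow> 'x set" where
  "gH G = gX G - gV G"

definition Hv :: "('x, 'g) mgraph \<Rightarrow> 'x \<Rightarrow> 'x set" where
  "Hv G v = {e \<in> gH G. gr G e = v}"

definition adj :: "('x, 'g) mgraph \<Rightarrow> ('x \<times> 'x) set" where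
  "adj G = {(gr G e, gr G (gi G e)) | e. e \<in> gH G}"

definition is_graph :: "('x, 'g) mgraph \<Rightarrow> bool" where
  "is_graph G \<longleftrightarrow>
     finite (gX G) \<and> gX G \<noteq> {} \<and>
     (\<forall>x\<in>gX G. gr G x \<in> gX G \<and> gr G (gr G x) = gr G x) \<and>
     (\<forall>x\<in>gX G. gi G x \<in> gX G \<and> gi G (gi G x) = x) \<and>
     (\<forall>x\<in>gX G. gi G x = x \<longleftrightarrow> gr G x = x) \<and>
     (\<forall>v\<in>gV G. \<forall>w\<in>gV G. (v, w) \<in> (adj G)\<^sup>*)"

definition metrised_graph :: "'g::ab_group_add set \<Rightarrow> ('x, 'g) mgraph \<Rightarrow> bool" where
  "metrised_graph M G \<longleftrightarrow> is_graph G \<and>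
     (\<forall>x\<in>gX G. gl G (gi G x) = gl G x \<and> gl G x \<in> M \<and> (gl G x = 0 \<longleftrightarrow> x \<in> gV G))"

definition divisor :: "('x, 'g) mgraph \<Rightarrow> ('x \<Rightarrow> int) \<Rightarrow> bool" where
  "divisor G D \<longleftrightarrow> (\<forall>x. x \<notin> gV G \<longrightarrow> D x = 0)"

definition effective :: "('x, 'g) mgraph \<Rightarrow> ('x \<Rightarrow> int) \<Rightarrow> bool" where
  "effective G D \<longleftrightarrow> divisor G D \<and> (\<forall>v. 0 \<le> D v)"

definition deg :: "('x, 'g) mgraph \<Rightarrow> ('x \<Rightarrow> int) \<Rightarrow> int" where
  "deg G D = (\<Sum>v\<in>gV G. D v)"

definition effdivs :: "('x, 'g) mgraph \<Rightarrow> int \<Rightarrow> ('x \<Rightarrow> int) set" where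
  "effdivs G k = {F. effective G F \<and> deg G F = k}"

definition PL :: "('x, 'g::ab_group_add) mgraph \<Rightarrow> ('x \<Rightarrow> 'g) set" where
  "PL G = {g. (\<forall>x. x \<notin> gV G \<longrightarrow> g x = 0) \<and>
              (\<forall>e\<in>gH G. g (gr G e) - g (gr G (gi G e)) \<in> zspan (gl G e))}"

definition Delta :: "('x, 'g::ab_group_add) mgraph \<Rightarrow> ('x \<Rightarrow> 'g) \<Rightarrow> ('x \<Rightarrow> int)" where
  "Delta G g = (\<lambda>v. if v \<in> gV G
       then (\<Sum>e\<in>Hv G v. zdiv (g v - g (gr G (gi G e))) (gl G e)) else 0)"

definition Prin :: "('x, 'g::ab_group_add) mgraph \<Rightarrow> ('x \<Rightarrow> int) set" where
  "Prin G = Delta G ` PL G"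

definition linsys :: "('x, 'g::ab_group_add) mgraph \<Rightarrow> ('x \<Rightarrow> int) \<Rightarrow> ('x \<Rightarrow> int) set" where
  "linsys G D = {E. effective G E \<and> E - D \<in> Prin G}"

definition rank :: "('x, 'g::ab_group_add) mgraph \<Rightarrow> ('x \<Rightarrow> int) \<Rightarrow> int" where
  "rank G D = (GREATEST k::int. \<forall>F\<in>effdivs G k. linsys G (D - F) \<noteq> {})"

definition morphism :: "('x, 'g::ab_group_add) mgraph \<Rightarrow> ('y, 'g) mgraph \<Rightarrow> ('x \<Rightarrow> 'y) \<Rightarrow> bool" where
  "morphism G G' \<phi> \<longleftrightarrow>
     (\<forall>x\<in>gX G. \<phi> x \<in> gX G') \<and>
     (\<forall>v\<in>gV G. \<phi> v \<in> gV G') \<and>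
     (\<forall>e\<in>gH G. \<phi> e \<in> gH G' \<longrightarrow>
        \<phi> (gr G e) = gr G' (\<phi> e) \<and>
        \<phi> (gr G (gi G e)) = gr G' (gi G' (\<phi> e)) \<and>
        gl G' (\<phi> e) \<in> zspan (gl G e)) \<and>
     (\<forall>e\<in>gH G. \<phi> e \<in> gV G' \<longrightarrow>
        \<phi> (gr G e) = \<phi> e \<and> \<phi> (gr G (gi G e)) = \<phi> e)"

definition slope :: "('x, 'g::ab_group_add) mgraph \<Rightarrow> ('y, 'g) mgraph \<Rightarrow> ('x \<Rightarrow> 'y) \<Rightarrow> 'x \<Rightarrow> int" where
  "slope G G' \<phi> e = (if \<phi> e \<in> gH G' then zdiv (gl G' (\<phi> e)) (gl G e) else 0)"

definition mloc :: "('x, 'g::ab_group_add) mgraph \<Rightarrow> ('y, 'g) mgraph \<Rightarrow> ('x \<Rightarrow> 'y) \<Rightarrow> 'x \<Rightarrow> 'y \<Rightarrow> int" where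
  "mloc G G' \<phi> v e' = (\<Sum>e\<in>{e \<in> Hv G v. \<phi> e = e'}. slope G G' \<phi> e)"

definition harmonic :: "('x, 'g::ab_group_add) mgraph \<Rightarrow> ('y, 'g) mgraph \<Rightarrow> ('x \<Rightarrow> 'y) \<Rightarrow> bool" where
  "harmonic G G' \<phi> \<longleftrightarrow>
     (\<forall>v\<in>gV G. \<forall>e1\<in>Hv G' (\<phi> v). \<forall>e2\<in>Hv G' (\<phi> v). mloc G G' \<phi> v e1 = mloc G G' \<phi> v e2)"

text \<open>The common value m_phi(v) (unspecified if H'_{phi(v)} is empty).\<close>
definition mult :: "('x, 'g::ab_group_add) mgraph \<Rightarrow> ('y, 'g) mgraph \<Rightarrow> ('x \<Rightarrow> 'y) \<Rightarrow> 'x \<Rightarrow> int" where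
  "mult G G' \<phi> v = (SOME k. \<forall>e'\<in>Hv G' (\<phi> v). mloc G G' \<phi> v e' = k)"

definition nondegenerate :: "('x, 'g::ab_group_add) mgraph \<Rightarrow> ('y, 'g) mgraph \<Rightarrow> ('x \<Rightarrow> 'y) \<Rightarrow> bool" where
  "nondegenerate G G' \<phi> \<longleftrightarrow> (\<forall>v\<in>gV G. mult G G' \<phi> v > 0)"

definition pullback :: "('x, 'g::ab_group_add) mgraph \<Rightarrow> ('y, 'g) mgraph \<Rightarrow> ('x \<Rightarrow> 'y) \<Rightarrow> ('y \<Rightarrow> int) \<Rightarrow> ('x \<Rightarrow> int)" where
  "pullback G G' \<phi> D' = (\<lambda>v. if v \<in> gV G then D' (\<phi> v) * mult G G' \<phi> v else 0)"

end

theory Submission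
  imports Defs
begin


lemma zmul_0[simp]: "zmul 0 x = 0" by (simp add: zmul_def)

lemma zmul_succ: "zmul (k+1) x = zmul k x + x"
proof (cases "0 \<le> k")
  case True
  then have "nat (k+1) = Suc (nat k)" by simp
  then show ?thesis using True by (simp add: zmul_def)
next
  case False
  have a: "zmul (k+1) x = - (\<Sum>_<nat (-(k+1)). x)"
    using False by (cases "k = -1") (auto simp: zmul_def)
  have "nat (-k) = Suc (nat (-(k+1)))" using False by simp
  then show ?thesis using False a by (simp add: zmul_def)
qed

lemma zmul_pred: "zmul (k-1) x = zmul k x - x"
  using zmul_succ[of "k-1" x] by simp

lemma zmul_add: "zmul (a+b) x = zmul a x + zmul b x"
proof (induction b rule: int_induct[where k=0])
  case base then show ?case by simp
next
  case (step1 i)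
  then show ?case using zmul_succ[of "a+i" x] zmul_succ[of i x] by (simp add: add.assoc[symmetric])
next
  case (step2 i)
  have "zmul (a+(i-1)) x = zmul (a+i) x - x" using zmul_pred[of "a+i" x] by (simp add: algebra_simps)
  also have "\<dots> = zmul a x + (zmul i x - x)" using step2 by (simp add: algebra_simps)
  finally show ?case using zmul_pred[of i x] by simp
qed

lemma zmul_neg: "zmul (-a) x = - zmul a x"
  using zmul_add[of a "-a" x] by (simp add: add_eq_0_iff2 add.commute)

lemma zmul_diff: "zmul (a-b) x = zmul a x - zmul b x"
  using zmul_add[of a "-b" x] zmul_neg[of b x] by simp

lemma zmul_1[simp]: "zmul 1 x = x" using zmul_succ[of 0 x] by simp

lemma zmul_mult: "zmul a (zmul b x) = zmul (a*b) x"
proof (induction a rule: int_induct[where k=0])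
  case base then show ?case by simp
next
  case (step1 i)
  then show ?case using zmul_succ[of i "zmul b x"] zmul_add[of "i*b" b x] by (simp add: algebra_simps)
next
  case (step2 i)
  have "zmul (i-1) (zmul b x) = zmul (i*b) x - zmul b x" using zmul_pred[of i "zmul b x"] step2 by simp
  also have "\<dots> = zmul ((i-1)*b) x" using zmul_diff[of "i*b" b x] by (simp add: algebra_simps)
  finally show ?case .
qed

lemma zmul_in_M:
  assumes M: "sharp_integral_monoid M" and x: "x \<in> M"
  shows "zmul (int n) x \<in> M"
proof (induction n)
  case 0 then show ?case using M by (simp add: sharp_integral_monoid_def)
next
  case (Suc n)
  then show ?case using zmul_succ[of "int n" x] M x by (simp add: sharp_integral_monoid_def add.commute)
qed

lemma zmul_inj:
  assumes M: "sharp_integral_monoid M" and x: "x \<in> M" "x \<noteq> 0"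
    and eq: "zmul a x = zmul b x"
  shows "a = b"
proof (rule ccontr)
  assume "a \<noteq> b"
  have z: "zmul (a-b) x = 0" using eq zmul_diff[of a b x] by simp
  obtain n where n: "zmul (int n + 1) x = 0"
  proof (cases "a - b > 0")
    case True
    then show ?thesis using z that[of "nat (a-b-1)"] by simp
  next
    case False
    then have "b - a > 0" using \<open>a \<noteq> b\<close> by simp
    moreover have "zmul (b-a) x = 0" using z zmul_neg[of "a-b" x] by simp
    ultimately show ?thesis using that[of "nat (b-a-1)"] by simp
  qed
  then have "zmul (int n) x + x = 0" using zmul_succ[of "int n" x] by simp
  moreover have "zmul (int n) x \<in> M" using zmul_in_M[OF M x(1)] .
  ultimately have "x = 0" using M x(1) unfolding sharp_integral_monoid_def by blast
  then show False using x by simp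
qed

lemma zdiv_zmul:
  assumes M: "sharp_integral_monoid M" and x: "x \<in> M" "x \<noteq> 0"
  shows "zdiv (zmul k x) x = k"
  unfolding zdiv_def using zmul_inj[OF M x] by (rule_tac the_equality) auto



lemma mg_facts:
  assumes G: "metrised_graph M G"
  shows "finite (gV G)" "finite (gH G)"
    "\<And>x. x \<in> gX G \<Longrightarrow> gr G x \<in> gV G"
    "\<And>e. e \<in> gH G \<Longrightarrow> gi G e \<in> gH G"
    "\<And>e. e \<in> gX G \<Longrightarrow> gi G (gi G e) = e"
    "\<And>e. e \<in> gH G \<Longrightarrow> gl G e \<in> M \<and> gl G e \<noteq> 0"
    "\<And>e. e \<in> gX G \<Longrightarrow> gl G (gi G e) = gl G e"
    "gV G \<noteq> {}"
    "\<And>e. e \<in> gH G \<Longrightarrow> gr G (gi G e) \<in> gV G"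
    "\<And>e. e \<in> gH G \<Longrightarrow> gr G e \<in> gV G"
proof -
  have g: "is_graph G" and l: "\<forall>x\<in>gX G. gl G (gi G x) = gl G x \<and> gl G x \<in> M \<and> (gl G x = 0 \<longleftrightarrow> x \<in> gV G)"
    using G unfolding metrised_graph_def by auto
  show "finite (gV G)" "finite (gH G)" using g unfolding is_graph_def gV_def gH_def by auto
  show rV: "\<And>x. x \<in> gX G \<Longrightarrow> gr G x \<in> gV G" using g unfolding is_graph_def gV_def by auto
  show "\<And>e. e \<in> gH G \<Longrightarrow> gi G e \<in> gH G"
  proof -
    fix e assume e: "e \<in> gH G"
    then have eX: "e \<in> gX G" and ne: "gr G e \<noteq> e" by (auto simp: gH_def gV_def)
    have iX: "gi G e \<in> gX G" and ii: "gi G (gi G e) = e" using g eX unfolding is_graph_def by auto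
    have iff: "\<And>x. x \<in> gX G \<Longrightarrow> gi G x = x \<longleftrightarrow> gr G x = x" using g unfolding is_graph_def by blast
    have "gr G (gi G e) \<noteq> gi G e"
    proof
      assume "gr G (gi G e) = gi G e"
      then have "gi G (gi G e) = gi G e" using iff[OF iX] by simp
      then have "gi G e = e" using ii by simp
      then show False using iff[OF eX] ne by simp
    qed
    then show "gi G e \<in> gH G" using iX by (simp add: gH_def gV_def)
  qed
  show "\<And>e. e \<in> gX G \<Longrightarrow> gi G (gi G e) = e" using g unfolding is_graph_def by auto
  show "\<And>e. e \<in> gH G \<Longrightarrow> gl G e \<in> M \<and> gl G e \<noteq> 0" using l unfolding gH_def by auto
  show "\<And>e. e \<in> gX G \<Longrightarrow> gl G (gi G e) = gl G e" using l by auto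
  obtain x where "x \<in> gX G" using g unfolding is_graph_def by auto
  then show "gV G \<noteq> {}" using rV by blast
  show "\<And>e. e \<in> gH G \<Longrightarrow> gr G (gi G e) \<in> gV G" using g rV unfolding is_graph_def gH_def by auto
  show "\<And>e. e \<in> gH G \<Longrightarrow> gr G e \<in> gV G" using rV unfolding gH_def by auto
qed

lemma deg_Delta:
  assumes M: "sharp_integral_monoid M" and G: "metrised_graph M G" and g: "g \<in> PL G"
  shows "deg G (Delta G g) = 0"
proof -
  note F = mg_facts[OF G]
  define f where "f e = zdiv (g (gr G e) - g (gr G (gi G e))) (gl G e)" for e
  have "deg G (Delta G g) = (\<Sum>v\<in>gV G. \<Sum>e\<in>Hv G v. f e)"
    unfolding deg_def Delta_def f_def by (intro sum.cong refl) (auto simp: Hv_def)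
  also have "\<dots> = (\<Sum>e\<in>gH G. f e)"
    unfolding Hv_def by (rule sum.group) (use F in auto)
  finally have d: "deg G (Delta G g) = (\<Sum>e\<in>gH G. f e)" .
  have neg: "f (gi G e) = - f e" if e: "e \<in> gH G" for e
  proof -
    obtain a where a: "g (gr G e) - g (gr G (gi G e)) = zmul a (gl G e)"
      using g e unfolding PL_def zspan_def by auto
    have eX: "e \<in> gX G" using e unfolding gH_def by auto
    have "f e = a" unfolding f_def a using zdiv_zmul[OF M] F(6)[OF e] by auto
    moreover have "f (gi G e) = zdiv (zmul (-a) (gl G e)) (gl G e)"
      unfolding f_def F(5)[OF eX] F(7)[OF eX] zmul_neg a[symmetric] by simp
    ultimately show ?thesis using zdiv_zmul[OF M] F(6)[OF e] by auto
  qed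
  have hii: "gi G (gi G a) = a" if "a \<in> gH G" for a using that F(5) by (simp add: gH_def)
  have "(\<Sum>e\<in>gH G. f e) = (\<Sum>e\<in>gH G. f (gi G e))"
    using F(4) hii by (intro sum.reindex_bij_witness[of _ "gi G" "gi G"]) auto
  also have "\<dots> = - (\<Sum>e\<in>gH G. f e)" using neg by (simp add: sum_negf)
  finally show ?thesis using d by simp
qed

lemma deg_eff: "effective G E \<Longrightarrow> deg G E \<ge> 0"
  unfolding effective_def deg_def by (simp add: sum_nonneg)

lemma deg_diff: "deg G (A - B) = deg G A - deg G B"
  unfolding deg_def by (simp add: sum_subtractf)

lemma deg_add: "deg G (\<lambda>x. A x + B x) = deg G A + deg G B"
  unfolding deg_def by (simp add: sum.distrib)

lemma rank_bound:
  assumes M: "sharp_integral_monoid M" and G: "metrised_graph M G"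
    and k: "k > max 0 (deg G D)"
  shows "\<not> (\<forall>F\<in>effdivs G k. linsys G (D - F) \<noteq> {})"
proof
  assume H: "\<forall>F\<in>effdivs G k. linsys G (D - F) \<noteq> {}"
  note Fa = mg_facts[OF G]
  obtain v0 where v0: "v0 \<in> gV G" using Fa(8) by auto
  define F where "F = (\<lambda>x. if x = v0 then k else 0)"
  have "effective G F" using k v0 unfolding F_def effective_def divisor_def by auto
  moreover have "deg G F = k" unfolding deg_def F_def using v0 Fa(1) by simp
  ultimately have "F \<in> effdivs G k" unfolding effdivs_def by auto
  with H obtain E where E: "effective G E" "E - (D - F) \<in> Prin G" unfolding linsys_def by auto
  then obtain g where g: "g \<in> PL G" "E - (D - F) = Delta G g" unfolding Prin_def by auto
  have "deg G E = deg G (D - F) + deg G (Delta G g)"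
    using deg_add[of G "D - F" "E - (D - F)"] g(2) by (simp add: fun_diff_def)
  also have "\<dots> = deg G D - k" using deg_Delta[OF M G g(1)] deg_diff[of G D F] \<open>deg G F = k\<close> by simp
  finally show False using deg_eff[OF E(1)] k by simp
qed

lemma greatest_int:
  fixes P :: "int \<Rightarrow> bool"
  assumes "P r" "\<And>k. P k \<Longrightarrow> k \<le> B"
  shows "P (GREATEST k. P k) \<and> r \<le> (GREATEST k. P k)"
proof -
  define S where "S = {k. P k \<and> r \<le> k}"
  have fin: "finite S" unfolding S_def
    by (rule finite_subset[of _ "{r..B}"]) (use assms in auto)
  have ne: "r \<in> S" unfolding S_def using assms by auto
  define m where "m = Max S"
  have mS: "m \<in> S" unfolding m_def using fin ne Max_in by auto
  have "(GREATEST k. P k) = m"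
  proof (rule Greatest_equality)
    show "P m" using mS S_def by auto
    fix y assume "P y"
    show "y \<le> m"
    proof (cases "r \<le> y")
      case True then show ?thesis using \<open>P y\<close> fin unfolding m_def S_def by (simp add: Max_ge)
    next
      case False then show ?thesis using mS S_def by auto
    qed
  qed
  then show ?thesis using mS S_def by auto
qed

lemma rank_prop:
  assumes M: "sharp_integral_monoid M" and G: "metrised_graph M G"
    and P: "\<forall>F\<in>effdivs G r. linsys G (D - F) \<noteq> {}"
  shows "(\<forall>F\<in>effdivs G (rank G D). linsys G (D - F) \<noteq> {}) \<and> r \<le> rank G D"
  unfolding rank_def
proof (rule greatest_int[of _ r "max 0 (deg G D)"])
  show "\<forall>F\<in>effdivs G r. linsys G (D - F) \<noteq> {}" by (rule P)
  fix k assume "\<forall>F\<in>effdivs G k. linsys G (D - F) \<noteq> {}"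
  then show "k \<le> max 0 (deg G D)" using rank_bound[OF M G, of D k] by (meson not_less)
qed



lemma mult_eq:
  assumes h: "harmonic G G' \<phi>" and v: "v \<in> gV G" and e': "e' \<in> Hv G' (\<phi> v)"
  shows "mloc G G' \<phi> v e' = mult G G' \<phi> v"
proof -
  have ex: "\<exists>k. \<forall>e'\<in>Hv G' (\<phi> v). mloc G G' \<phi> v e' = k"
  proof
    have "\<forall>e1\<in>Hv G' (\<phi> v). \<forall>e2\<in>Hv G' (\<phi> v). mloc G G' \<phi> v e1 = mloc G G' \<phi> v e2"
      using h v unfolding harmonic_def by blast
    then show "\<forall>e2\<in>Hv G' (\<phi> v). mloc G G' \<phi> v e2 = mloc G G' \<phi> v e'" using e' by blast
  qed
  have "\<forall>e'\<in>Hv G' (\<phi> v). mloc G G' \<phi> v e' = mult G G' \<phi> v"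
    unfolding mult_def by (rule someI_ex[OF ex])
  then show ?thesis using e' by blast
qed

lemma edge_calc:
  assumes M: "sharp_integral_monoid M" and G: "metrised_graph M G" and G': "metrised_graph M G'"
    and mor: "morphism G G' \<phi>" and g: "g \<in> PL G'"
    and e: "e \<in> gH G" and e': "\<phi> e \<in> gH G'"
  shows "g (\<phi> (gr G e)) - g (\<phi> (gr G (gi G e))) =
         zmul (zdiv (g (gr G' (\<phi> e)) - g (gr G' (gi G' (\<phi> e)))) (gl G' (\<phi> e)) * slope G G' \<phi> e) (gl G e)"
    and "\<phi> (gr G e) = gr G' (\<phi> e)"
proof -
  have "\<forall>e\<in>gH G. \<phi> e \<in> gH G' \<longrightarrow>
        \<phi> (gr G e) = gr G' (\<phi> e) \<and>
        \<phi> (gr G (gi G e)) = gr G' (gi G' (\<phi> e)) \<and>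
        gl G' (\<phi> e) \<in> zspan (gl G e)" using mor unfolding morphism_def by blast
  then have m: "\<phi> (gr G e) = gr G' (\<phi> e)" "\<phi> (gr G (gi G e)) = gr G' (gi G' (\<phi> e))"
     "gl G' (\<phi> e) \<in> zspan (gl G e)" using e e' by blast+
  then show "\<phi> (gr G e) = gr G' (\<phi> e)" by simp
  obtain s where s: "gl G' (\<phi> e) = zmul s (gl G e)" using m(3) unfolding zspan_def by auto
  obtain a where a: "g (gr G' (\<phi> e)) - g (gr G' (gi G' (\<phi> e))) = zmul a (gl G' (\<phi> e))"
    using g e' unfolding PL_def zspan_def by auto
  have l1: "gl G e \<in> M" "gl G e \<noteq> 0" using mg_facts(6)[OF G e] by auto
  have l2: "gl G' (\<phi> e) \<in> M" "gl G' (\<phi> e) \<noteq> 0" using mg_facts(6)[OF G' e'] by auto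
  have sl: "slope G G' \<phi> e = s" unfolding slope_def using e' zdiv_zmul[OF M l1, of s] by (simp add: s)
  have ad: "zdiv (zmul a (gl G' (\<phi> e))) (gl G' (\<phi> e)) = a" by (rule zdiv_zmul[OF M l2])
  show "g (\<phi> (gr G e)) - g (\<phi> (gr G (gi G e))) =
         zmul (zdiv (g (gr G' (\<phi> e)) - g (gr G' (gi G' (\<phi> e)))) (gl G' (\<phi> e)) * slope G G' \<phi> e) (gl G e)"
    unfolding m(1,2) a ad sl using zmul_mult[of a s "gl G e"] s by simp
qed

lemma edge_vert:
  assumes mor: "morphism G G' \<phi>" and e: "e \<in> gH G" and e': "\<phi> e \<notin> gH G'"
  shows "\<phi> (gr G e) = \<phi> e" "\<phi> (gr G (gi G e)) = \<phi> e"
proof -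
  have "\<phi> e \<in> gX G'" using mor e unfolding morphism_def gH_def by auto
  then have "\<phi> e \<in> gV G'" using e' unfolding gH_def by auto
  then show "\<phi> (gr G e) = \<phi> e" "\<phi> (gr G (gi G e)) = \<phi> e" using mor e unfolding morphism_def by auto
qed

lemma pull_PL:
  assumes M: "sharp_integral_monoid M" and G: "metrised_graph M G" and G': "metrised_graph M G'"
    and mor: "morphism G G' \<phi>" and g: "g \<in> PL G'"
  shows "(\<lambda>x. if x \<in> gV G then g (\<phi> x) else 0) \<in> PL G" (is "?h \<in> _")
  unfolding PL_def
proof (intro CollectI conjI allI impI ballI)
  fix x assume "x \<notin> gV G" then show "?h x = 0" by simp
next
  fix e assume e: "e \<in> gH G"
  have v: "gr G e \<in> gV G" "gr G (gi G e) \<in> gV G" using mg_facts(9,10)[OF G e] by auto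
  show "?h (gr G e) - ?h (gr G (gi G e)) \<in> zspan (gl G e)"
  proof (cases "\<phi> e \<in> gH G'")
    case True
    then show ?thesis using v edge_calc(1)[OF M G G' mor g e True] unfolding zspan_def by auto
  next
    case False
    then show ?thesis using v edge_vert[OF mor e False] unfolding zspan_def
      by (auto intro: range_eqI[of _ _ 0])
  qed
qed

lemma pull_Delta:
  assumes M: "sharp_integral_monoid M" and G: "metrised_graph M G" and G': "metrised_graph M G'"
    and mor: "morphism G G' \<phi>" and harm: "harmonic G G' \<phi>" and g: "g \<in> PL G'"
  shows "Delta G (\<lambda>x. if x \<in> gV G then g (\<phi> x) else 0) = pullback G G' \<phi> (Delta G' g)" (is "Delta G ?h = _")
proof
  fix v
  show "Delta G ?h v = pullback G G' \<phi> (Delta G' g) v"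
  proof (cases "v \<in> gV G")
    case False then show ?thesis unfolding Delta_def pullback_def by simp
  next
    case True
    note v = True
    have vX: "v \<in> gX G" using v unfolding gV_def by auto
    have pv: "\<phi> v \<in> gV G'" using mor v unfolding morphism_def by auto
    define a where "a e' = zdiv (g (\<phi> v) - g (gr G' (gi G' e'))) (gl G' e')" for e'
    define t where "t e = slope G G' \<phi> e * a (\<phi> e)" for e
    define B where "B = Hv G' (\<phi> v)"
    define C where "C = B \<union> \<phi> ` Hv G v"
    have finA: "finite (Hv G v)" using mg_facts(2)[OF G] unfolding Hv_def by auto
    have finB: "finite B" using mg_facts(2)[OF G'] unfolding B_def Hv_def by auto
    have finC: "finite C" using finA finB unfolding C_def by auto
    have trm: "zdiv (?h v - ?h (gr G (gi G e))) (gl G e) = t e" if e: "e \<in> Hv G v" for e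
    proof -
      have eH: "e \<in> gH G" and re: "gr G e = v" using e unfolding Hv_def by auto
      have rie: "gr G (gi G e) \<in> gV G" using mg_facts(9)[OF G eH] .
      show ?thesis
      proof (cases "\<phi> e \<in> gH G'")
        case True
        have "?h v - ?h (gr G (gi G e)) = g (\<phi> (gr G e)) - g (\<phi> (gr G (gi G e)))" using v rie re by simp
        also have "\<dots> = zmul (a (\<phi> e) * slope G G' \<phi> e) (gl G e)"
          using edge_calc[OF M G G' mor g eH True] re unfolding a_def by simp
        finally show ?thesis unfolding t_def using zdiv_zmul[OF M] mg_facts(6)[OF G eH] by (simp add: mult.commute)
      next
        case False
        have "?h v - ?h (gr G (gi G e)) = zmul 0 (gl G e)" using v rie re edge_vert[OF mor eH False] by simp
        moreover have "slope G G' \<phi> e = 0" using False unfolding slope_def by simp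
        ultimately show ?thesis unfolding t_def using zdiv_zmul[OF M _ _, of "gl G e" 0] mg_facts(6)[OF G eH] by simp
      qed
    qed
    have "Delta G ?h v = (\<Sum>e\<in>Hv G v. zdiv (?h v - ?h (gr G (gi G e))) (gl G e))"
      unfolding Delta_def using v by simp
    also have "\<dots> = (\<Sum>e\<in>Hv G v. t e)" by (rule sum.cong[OF refl]) (rule trm)
    also have "\<dots> = (\<Sum>e'\<in>C. \<Sum>e\<in>{e \<in> Hv G v. \<phi> e = e'}. t e)"
      by (rule sum.group[symmetric]) (use finA finC C_def in auto)
    also have "\<dots> = (\<Sum>e'\<in>B. \<Sum>e\<in>{e \<in> Hv G v. \<phi> e = e'}. t e)"
    proof (rule sum.mono_neutral_left[symmetric])
      show "finite C" by (rule finC)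
      show "B \<subseteq> C" unfolding C_def by auto
      show "\<forall>i\<in>C - B. (\<Sum>e\<in>{e \<in> Hv G v. \<phi> e = i}. t e) = 0"
      proof (intro ballI sum.neutral)
        fix e' e assume e': "e' \<in> C - B" and e: "e \<in> {e \<in> Hv G v. \<phi> e = e'}"
        have "\<phi> e \<notin> gH G'"
        proof
          assume H: "\<phi> e \<in> gH G'"
          have "e \<in> gH G" "gr G e = v" using e unfolding Hv_def by auto
          then have "gr G' (\<phi> e) = \<phi> v" using edge_calc(2)[OF M G G' mor g \<open>e \<in> gH G\<close> H] by simp
          then have "\<phi> e \<in> B" using H unfolding B_def Hv_def by auto
          then show False using e e' by auto
        qed
        then show "t e = 0" unfolding t_def slope_def by simp
      qed
    qed
    also have "\<dots> = (\<Sum>e'\<in>B. a e' * mult G G' \<phi> v)"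
    proof (rule sum.cong[OF refl])
      fix e' assume e': "e' \<in> B"
      have "(\<Sum>e\<in>{e \<in> Hv G v. \<phi> e = e'}. t e) = (\<Sum>e\<in>{e \<in> Hv G v. \<phi> e = e'}. slope G G' \<phi> e * a e')"
        unfolding t_def by (rule sum.cong) auto
      also have "\<dots> = mloc G G' \<phi> v e' * a e'" unfolding mloc_def by (simp add: sum_distrib_right)
      also have "\<dots> = a e' * mult G G' \<phi> v" using mult_eq[OF harm v] e' unfolding B_def by simp
      finally show "(\<Sum>e\<in>{e \<in> Hv G v. \<phi> e = e'}. t e) = a e' * mult G G' \<phi> v" .
    qed
    also have "\<dots> = Delta G' g (\<phi> v) * mult G G' \<phi> v"
      unfolding Delta_def B_def a_def using pv by (simp add: sum_distrib_right)
    finally show ?thesis unfolding pullback_def using v by simp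
  qed
qed



definition push :: "('x, 'g) mgraph \<Rightarrow> ('x \<Rightarrow> 'y) \<Rightarrow> ('x \<Rightarrow> int) \<Rightarrow> ('y \<Rightarrow> int)" where
  "push G \<phi> F = (\<lambda>y. \<Sum>v\<in>{v \<in> gV G. \<phi> v = y}. F v)"

theorem lemma3p7:
  fixes M :: "'g::ab_group_add set"
    and G :: "('x, 'g) mgraph" and G' :: "('y, 'g) mgraph"
    and \<phi> :: "'x \<Rightarrow> 'y" and D' :: "'y \<Rightarrow> int"
  assumes "sharp_integral_monoid M"
    and "metrised_graph M G" and "metrised_graph M G'"
    and "morphism G G' \<phi>" and "harmonic G G' \<phi>" and "nondegenerate G G' \<phi>"
    and "effective G' D'"
  shows "rank G (pullback G G' \<phi> D') \<ge> rank G' D'"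
proof -
  note M = assms(1) and G = assms(2) and G' = assms(3) and mor = assms(4)
    and harm = assms(5) and nd = assms(6)
  have Vmap: "\<phi> v \<in> gV G'" if "v \<in> gV G" for v using mor that unfolding morphism_def by blast
  have finV: "finite (gV G)" using mg_facts(1)[OF G] .
  have finV': "finite (gV G')" using mg_facts(1)[OF G'] .
  define r where "r = rank G' D'"
  have neg: "\<forall>F\<in>effdivs G' (-1). linsys G' (D' - F) \<noteq> {}"
    unfolding effdivs_def using deg_eff by fastforce
  have P': "\<forall>F\<in>effdivs G' r. linsys G' (D' - F) \<noteq> {}"
    using rank_prop[OF M G' neg] unfolding r_def by blast
  have P: "\<forall>F\<in>effdivs G r. linsys G (pullback G G' \<phi> D' - F) \<noteq> {}"
  proof
    fix F assume F: "F \<in> effdivs G r"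
    then have Feff: "effective G F" and Fdeg: "deg G F = r" unfolding effdivs_def by auto
    have Fz: "F x = 0" if "x \<notin> gV G" for x using Feff that unfolding effective_def divisor_def by auto
    have Fn: "0 \<le> F x" for x using Feff unfolding effective_def by auto
    define F' where "F' = push G \<phi> F"
    have "effective G' F'"
      unfolding effective_def divisor_def F'_def push_def
    proof (intro conjI allI impI)
      fix y assume "y \<notin> gV G'"
      then have em: "{v \<in> gV G. \<phi> v = y} = {}" using Vmap by auto
      show "(\<Sum>v\<in>{v \<in> gV G. \<phi> v = y}. F v) = 0" unfolding em by (rule sum.empty)
    next
      fix y show "0 \<le> (\<Sum>v\<in>{v \<in> gV G. \<phi> v = y}. F v)" using Fn by (simp add: sum_nonneg)
    qed
    moreover have "deg G' F' = r"
    proof -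
      have "deg G' F' = (\<Sum>y\<in>gV G'. \<Sum>v\<in>{v \<in> gV G. \<phi> v = y}. F v)"
        unfolding deg_def F'_def push_def by simp
      also have "\<dots> = (\<Sum>v\<in>gV G. F v)" by (rule sum.group) (use finV finV' Vmap in auto)
      finally show ?thesis using Fdeg unfolding deg_def by simp
    qed
    ultimately have "F' \<in> effdivs G' r" unfolding effdivs_def by auto
    with P' obtain E' where E': "effective G' E'" "E' - (D' - F') \<in> Prin G'"
      unfolding linsys_def by auto
    then obtain g where g: "g \<in> PL G'" and eq: "E' - (D' - F') = Delta G' g"
      unfolding Prin_def by auto
    define h where "h = (\<lambda>x. if x \<in> gV G then g (\<phi> x) else 0)"
    have hPL: "h \<in> PL G" unfolding h_def by (rule pull_PL[OF M G G' mor g])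
    have hD: "Delta G h = pullback G G' \<phi> (Delta G' g)" unfolding h_def by (rule pull_Delta[OF M G G' mor harm g])
    define E where "E = (\<lambda>v. pullback G G' \<phi> E' v + (pullback G G' \<phi> F' v - F v))"
    have mpos: "mult G G' \<phi> v > 0" if "v \<in> gV G" for v using nd that unfolding nondegenerate_def by blast
    have E'n: "0 \<le> E' y" for y using E'(1) unfolding effective_def by auto
    have Eeff: "effective G E"
      unfolding effective_def divisor_def
    proof (intro conjI allI impI)
      fix x assume "x \<notin> gV G" then show "E x = 0" unfolding E_def pullback_def using Fz by simp
    next
      fix v show "0 \<le> E v"
      proof (cases "v \<in> gV G")
        case False then show ?thesis unfolding E_def pullback_def using Fz by simp
      next
        case True
        have m: "mult G G' \<phi> v \<ge> 1" using mpos[OF True] by simp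
        have "F v \<le> F' (\<phi> v)" unfolding F'_def push_def
          by (rule member_le_sum) (use True finV Fn in auto)
        also have "\<dots> \<le> F' (\<phi> v) * mult G G' \<phi> v"
          using m \<open>effective G' F'\<close> unfolding effective_def
          by (metis mult.right_neutral mult_left_mono)
        finally have "0 \<le> pullback G G' \<phi> F' v - F v" unfolding pullback_def using True by simp
        moreover have "0 \<le> pullback G G' \<phi> E' v" unfolding pullback_def using True m E'n by simp
        ultimately show ?thesis unfolding E_def by simp
      qed
    qed
    have "E - (pullback G G' \<phi> D' - F) = Delta G h"
    proof
      fix v
      have e: "E' y - (D' y - F' y) = Delta G' g y" for y using eq by (metis fun_diff_def)
      show "(E - (pullback G G' \<phi> D' - F)) v = Delta G h v"
        unfolding hD using e[of "\<phi> v"]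
        by (auto simp: E_def pullback_def fun_diff_def algebra_simps) (metis distrib_right)
    qed
    then have "E \<in> linsys G (pullback G G' \<phi> D' - F)"
      unfolding linsys_def Prin_def using Eeff hPL by auto
    then show "linsys G (pullback G G' \<phi> D' - F) \<noteq> {}" by auto
  qed
  show ?thesis using rank_prop[OF M G P] unfolding r_def by simp
qed


end
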